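(* Let $m$ be even, $\mathcal{A}\in T_{m,n}$, $\mathcal{B}\in S_{m,n}$ positive definite, $F(\mathbf{z})=F(\mathbf{x},t)=(t^2\mathcal{B}-\mathcal{A})\mathbf{x}^{m-1}$, $\tau\in(0,1)$, and let $H_\tau(\mathbf{z})=\begin{pmatrix}\Phi_\tau(\mathbf{z})\\ \mathbf{x}^\top\mathbf{x}-1\end{pmatrix}$ with $\Phi_\tau(\mathbf{z})=[\phi_\tau(x_i,F_i(\mathbf{z}))]_{i=1}^n$. Fix $\mathbf{z}=(\mathbf{x},t)\in\mathbb{R}^{n+1}$ and let $V\in\mathbb{R}^{n\times(n+1)}$ be the matrix produced by Procedure P (see context) with this $\tau$. Suppose $\nabla_{\mathbf{x}}F_i(\mathbf{z})^\top\mathbf{c}\neq0$ for all $i\in S_3$. Then $G=\begin{pmatrix}V\\ 2\mathbf{x}^\top\ \ 0\end{pmatrix}$ belongs to the B-subdifferential $\partial_BH_\tau(\mathbf{z})$.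
   Context: $(\mathcal{A}\mathbf{x}^{m-1})_i=\sum_{i_2,\ldots,i_m}a_{i i_2\ldots i_m}x_{i_2}\cdots x_{i_m}$; $\mathcal{B}$ symmetric with $\mathcal{B}\mathbf{x}^m>0$ for $\mathbf{x}\ne0$. $\phi_\tau(a,b)=\tau(a+b-\sqrt{a^2+b^2})+(1-\tau)a_+b_+$, $x_+=\max\{x,0\}$. $\partial_BG(\mathbf{z})$ is the set of limits of Jacobians $JG(\mathbf{z}^k)$ along sequences of differentiability points $\mathbf{z}^k\to\mathbf{z}$. $\nabla F_i(\mathbf{z})\in\mathbb{R}^{n+1}$ is the gradient of $F_i$ w.r.t. $\mathbf{z}=(\mathbf{x},t)$ and $\nabla_{\mathbf{x}}F_i(\mathbf{z})\in\mathbb{R}^n$ the gradient w.r.t. $\mathbf{x}$; $\mathbf{e}_i$ is the $i$th unit vector of $\mathbb{R}^n$, $\|\cdot\|$ the Euclidean norm, and $V_i$ the $i$th row of $V$. Procedure P (given $\tau\in(0,1]$ and $\mathbf{z}$): Let $S_1=\{i: x_i=0,F_i(\mathbf{z})=0\}$, $S_2=\{i:x_i=0,F_i(\mathbf{z})>0\}$, $S_3=\{i:x_i>0,F_i(\mathbf{z})=0\}$, $S_4=\{i:x_i>0,F_i(\mathbf{z})>0\}$. Let $\mathbf{c}\in\mathbb{R}^n$ with $c_i=1$ for $i\in S_1\cup S_2\cup S_3$ and $c_i=0$ otherwise. Writing $s_i=\nabla_{\mathbf{x}}F_i(\mathbf{z})^\top\mathbf{c}$: for $i\in S_1$: $V_i=\tau\big(1+\tfrac{c_i}{\|(c_i,s_i)\|}\big)(\mathbf{e}_i^\top,0)+\tau\big(1+\tfrac{s_i}{\|(c_i,s_i)\|}\big)\nabla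 F_i(\mathbf{z})^\top$; for $i\in S_3$: $V_i=(\tau+(1-\tau)x_i)\nabla F_i(\mathbf{z})^\top$ if $s_i<0$, and $V_i=\tau\nabla F_i(\mathbf{z})^\top$ otherwise; for $i\in S_4$: $V_i=\big[\tau\big(1-\tfrac{x_i}{\|(x_i,F_i(\mathbf{z}))\|}\big)+(1-\tau)F_i(\mathbf{z})\big](\mathbf{e}_i^\top,0)+\big[\tau\big(1-\tfrac{F_i(\mathbf{z})}{\|(x_i,F_i(\mathbf{z}))\|}\big)+(1-\tau)x_i\big]\nabla F_i(\mathbf{z})^\top$; for $i\notin S_1\cup S_3\cup S_4$: $V_i=\tau\big(1-\tfrac{x_i}{\|(x_i,F_i(\mathbf{z}))\|}\big)(\mathbf{e}_i^\top,0)+\tau\big(1-\tfrac{F_i(\mathbf{z})}{\|(x_i,F_i(\mathbf{z}))\|}\big)\nabla F_i(\mathbf{z})^\top$. *)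

theory Defs
  imports "HOL-Analysis.Analysis"
begin

text \<open>Real tensors of order m and dimension n: functions on index lists (only lists of
  length m matter); the index set is the finite type 'n (so n = CARD('n)).\<close>
type_synonym 'n tensor = "'n list \<Rightarrow> real"

definition tvec :: "nat \<Rightarrow> ('n::finite) tensor \<Rightarrow> real^'n \<Rightarrow> real^'n" where
  "tvec m A x = (\<chi> i. \<Sum>is\<in>{is::'n list. length is = m - 1}.
      A (i # is) * prod_list (map (\<lambda>j. x $ j) is))"

definition tpow :: "nat \<Rightarrow> ('n::finite) tensor \<Rightarrow> real^'n \<Rightarrow> real" where
  "tpow m A x = (\<Sum>is\<in>{is::'n list. length is = m}. A is * prod_list (map (\<lambda>j. x $ j) is))"

definition symmetric_tensor :: "nat \<Rightarrow> ('n::finite) tensor \<Rightarrow> bool" where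
  "symmetric_tensor m B \<longleftrightarrow>
     (\<forall>is js. length is = m \<longrightarrow> mset js = mset is \<longrightarrow> B is = B js)"

definition pos :: "real \<Rightarrow> real" where "pos x = max x 0"

definition phi :: "real \<Rightarrow> real \<Rightarrow> real \<Rightarrow> real" where
  "phi tau a b = tau * (a + b - sqrt (a\<^sup>2 + b\<^sup>2)) + (1 - tau) * pos a * pos b"

definition FF :: "nat \<Rightarrow> ('n::finite) tensor \<Rightarrow> 'n tensor \<Rightarrow> (real^'n) \<times> real \<Rightarrow> real^'n" where
  "FF m A B z = (\<chi> i. (snd z)\<^sup>2 * tvec m B (fst z) $ i - tvec m A (fst z) $ i)"

definition HH :: "nat \<Rightarrow> ('n::finite) tensor \<Rightarrow> 'n tensor \<Rightarrow> real \<Rightarrow> (real^'n) \<times> real \<Rightarrow> (real^'n) \<times> real" where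
  "HH m A B tau z = ((\<chi> i. phi tau (fst z $ i) (FF m A B z $ i)), fst z \<bullet> fst z - 1)"

definition grad :: "('a::real_inner \<Rightarrow> real) \<Rightarrow> 'a \<Rightarrow> 'a" where
  "grad f z = (THE D. GDERIV f z :> D)"

definition gradF :: "((real^'n) \<times> real \<Rightarrow> real^'n) \<Rightarrow> (real^'n) \<times> real \<Rightarrow> 'n \<Rightarrow> (real^'n) \<times> real" where
  "gradF F z i = grad (\<lambda>w. F w $ i) z"

definition gradxF :: "((real^'n) \<times> real \<Rightarrow> real^'n) \<Rightarrow> (real^'n) \<times> real \<Rightarrow> 'n \<Rightarrow> real^'n" where
  "gradxF F z i = fst (gradF F z i)"

definition S1 where "S1 F z = {i. fst z $ i = 0 \<and> F z $ i = 0}"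
definition S2 where "S2 F z = {i. fst z $ i = 0 \<and> F z $ i > 0}"
definition S3 where "S3 F z = {i. fst z $ i > 0 \<and> F z $ i = 0}"
definition S4 where "S4 F z = {i. fst z $ i > 0 \<and> F z $ i > 0}"

definition cvec :: "((real^'n) \<times> real \<Rightarrow> real^'n) \<Rightarrow> (real^'n) \<times> real \<Rightarrow> real^'n" where
  "cvec F z = (\<chi> i. if i \<in> S1 F z \<union> S2 F z \<union> S3 F z then 1 else 0)"

definition sval :: "((real^'n) \<times> real \<Rightarrow> real^'n) \<Rightarrow> (real^'n) \<times> real \<Rightarrow> 'n \<Rightarrow> real" where
  "sval F z i = gradxF F z i \<bullet> cvec F z"

definition procP :: "real \<Rightarrow> ((real^'n) \<times> real \<Rightarrow> real^'n) \<Rightarrow> (real^'n) \<times> real \<Rightarrow> 'n \<Rightarrow> (real^'n) \<times> real" where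
  "procP tau F z i =
    (let x = fst z $ i; f = F z $ i; c = cvec F z $ i; s = sval F z i;
         g = gradF F z i; e = (axis i 1, 0::real) in
     if i \<in> S1 F z then
       (tau * (1 + c / norm (c, s))) *\<^sub>R e + (tau * (1 + s / norm (c, s))) *\<^sub>R g
     else if i \<in> S3 F z then
       (if s < 0 then (tau + (1 - tau) * x) *\<^sub>R g else tau *\<^sub>R g)
     else if i \<in> S4 F z then
       (tau * (1 - x / norm (x, f)) + (1 - tau) * f) *\<^sub>R e
       + (tau * (1 - f / norm (x, f)) + (1 - tau) * x) *\<^sub>R g
     else
       (tau * (1 - x / norm (x, f))) *\<^sub>R e + (tau * (1 - f / norm (x, f))) *\<^sub>R g)"

text \<open>Convergence of the linear maps is entrywise
  (equivalently, in any norm, as the spaces are finite-dimensional).\<close>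
definition Bsubdiff :: "('a::euclidean_space \<Rightarrow> 'b::euclidean_space) \<Rightarrow> 'a \<Rightarrow> ('a \<Rightarrow> 'b) set" where
  "Bsubdiff G z = {L. \<exists>zk Dk. zk \<longlonglongrightarrow> z \<and> (\<forall>k. (G has_derivative Dk k) (at (zk k)))
       \<and> (\<forall>v. (\<lambda>k. Dk k v) \<longlonglongrightarrow> L v)}"

end

theory Submission
  imports Defs
begin


inductive_set polyf :: "('a::euclidean_space \<Rightarrow> real) set" where
  pconst: "(\<lambda>w. c) \<in> polyf"
| plin: "(\<lambda>w. w \<bullet> b) \<in> polyf"
| padd: "f \<in> polyf \<Longrightarrow> g \<in> polyf \<Longrightarrow> (\<lambda>w. f w + g w) \<in> polyf"
| pmult: "f \<in> polyf \<Longrightarrow> g \<in> polyf \<Longrightarrow> (\<lambda>w. f w * g w) \<in> polyf"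

lemma polyf_diff: "f \<in> polyf \<Longrightarrow> g \<in> polyf \<Longrightarrow> (\<lambda>w. f w - g w) \<in> polyf"
proof -
  assume "f \<in> polyf" "g \<in> polyf"
  hence "(\<lambda>w. f w + (\<lambda>w. -1) w * g w) \<in> polyf" by (intro padd pmult pconst)
  thus ?thesis by simp
qed

lemma polyf_sum: "(\<And>x. x \<in> S \<Longrightarrow> f x \<in> polyf) \<Longrightarrow> (\<lambda>w. \<Sum>x\<in>S. f x w) \<in> polyf"
proof (cases "finite S")
  case True
  assume "\<And>x. x \<in> S \<Longrightarrow> f x \<in> polyf"
  with True show ?thesis
  proof (induction S rule: finite_induct)
    case empty then show ?case using pconst[of 0] by simp
  next
    case (insert x F) then show ?case using padd[of "f x" "\<lambda>w. \<Sum>x\<in>F. f x w"] by simp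
  qed
next
  case False then show ?thesis using pconst[of 0] by simp
qed

lemma polyf_prod_list: "(\<And>j. h j \<in> polyf) \<Longrightarrow> (\<lambda>w. prod_list (map (\<lambda>j. h j w) is)) \<in> polyf"
proof (induction "is")
  case Nil then show ?case using pconst[of 1] by simp
next
  case (Cons a t) then show ?case using pmult[of "h a" "\<lambda>w. prod_list (map (\<lambda>j. h j w) t)"] by simp
qed

lemma polyf_cont: "f \<in> polyf \<Longrightarrow> continuous_on UNIV f"
  by (induction rule: polyf.induct) (auto intro!: continuous_intros)

lemma polyf_deriv: "f \<in> polyf \<Longrightarrow> \<exists>df. (\<forall>w. (f has_derivative df w) (at w)) \<and> (\<forall>v. (\<lambda>w. df w v) \<in> polyf)"
proof (induction rule: polyf.induct)
  case (pconst c)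
  show ?case by (rule exI[of _ "\<lambda>w v. 0"]) (auto intro: polyf.pconst)
next
  case (plin b)
  show ?case by (rule exI[of _ "\<lambda>w v. v \<bullet> b"]) (auto intro: polyf.pconst derivative_eq_intros)
next
  case (padd f g)
  then obtain df dg where "\<forall>w. (f has_derivative df w) (at w)" "\<forall>v. (\<lambda>w. df w v) \<in> polyf"
    "\<forall>w. (g has_derivative dg w) (at w)" "\<forall>v. (\<lambda>w. dg w v) \<in> polyf" by blast
  then show ?case
    by (intro exI[of _ "\<lambda>w v. df w v + dg w v"]) (auto intro: polyf.padd has_derivative_add)
next
  case (pmult f g)
  then obtain df dg where "\<forall>w. (f has_derivative df w) (at w)" "\<forall>v. (\<lambda>w. df w v) \<in> polyf"
    "\<forall>w. (g has_derivative dg w) (at w)" "\<forall>v. (\<lambda>w. dg w v) \<in> polyf" by blast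
  then show ?case
    by (intro exI[of _ "\<lambda>w v. f w * dg w v + df w v * g w"])
       (auto intro!: polyf.padd polyf.pmult has_derivative_mult pmult.hyps)
qed



lemma grad_polyf:
  fixes f :: "'a::euclidean_space \<Rightarrow> real"
  assumes "\<forall>w. (f has_derivative df w) (at w)"
  shows "GDERIV f w :> grad f w" "grad f w \<bullet> v = df w v"
proof -
  define D where "D = (\<Sum>b\<in>Basis. df w b *\<^sub>R b)"
  have lin: "linear (df w)" using assms has_derivative_linear by blast
  have eq: "h \<bullet> D = df w h" for h
  proof -
    have "df w h = df w (\<Sum>b\<in>Basis. (h \<bullet> b) *\<^sub>R b)" by (simp add: euclidean_representation)
    also have "\<dots> = (\<Sum>b\<in>Basis. (h \<bullet> b) * df w b)"
      by (simp add: linear_sum[OF lin] linear_scale[OF lin])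
    also have "\<dots> = h \<bullet> D" unfolding D_def by (simp add: inner_sum_right mult.commute)
    finally show ?thesis by simp
  qed
  have G: "GDERIV f w :> D" unfolding gderiv_def using assms eq by simp
  have U: "D' = D" if "GDERIV f w :> D'" for D'
  proof -
    have "(\<lambda>h. h \<bullet> D') = (\<lambda>h. h \<bullet> D)" using that G unfolding gderiv_def by (rule has_derivative_unique)
    hence "(D' - D) \<bullet> D' = (D' - D) \<bullet> D" by metis
    hence "(D' - D) \<bullet> (D' - D) = 0" by (simp add: inner_diff_right)
    thus ?thesis by simp
  qed
  have "grad f w = D" unfolding grad_def using G U by blast
  thus "GDERIV f w :> grad f w" "grad f w \<bullet> v = df w v" using G eq by (auto simp: inner_commute)
qed

lemma FF_polyf:
  fixes A B :: "('n::finite) tensor"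
  shows "(\<lambda>w. FF m A B w $ i) \<in> polyf"
proof -
  have c: "(\<lambda>w::(real^'n)\<times>real. fst w $ j) \<in> polyf" for j
  proof -
    have "(\<lambda>w::(real^'n)\<times>real. w \<bullet> (axis j 1, 0)) \<in> polyf" by (rule plin)
    thus ?thesis by (simp add: inner_Pair_0 inner_axis)
  qed
  have s: "(\<lambda>w::(real^'n)\<times>real. snd w) \<in> polyf"
  proof -
    have "(\<lambda>w::(real^'n)\<times>real. w \<bullet> (0, 1)) \<in> polyf" by (rule plin)
    thus ?thesis by (simp add: inner_Pair_0)
  qed
  have t: "(\<lambda>w::(real^'n)\<times>real. tvec m C (fst w) $ i) \<in> polyf" for C :: "'n tensor"
    unfolding tvec_def
    by (simp, intro polyf_sum pmult pconst polyf_prod_list c)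
  have "(\<lambda>w::(real^'n)\<times>real. snd w * snd w * tvec m B (fst w) $ i - tvec m A (fst w) $ i) \<in> polyf"
    by (intro polyf_diff pmult s t)
  thus ?thesis unfolding FF_def by (simp add: power2_eq_square)
qed

definition pa :: "real \<Rightarrow> real \<Rightarrow> real \<Rightarrow> real" where
  "pa tau a b = tau * (1 - a / sqrt (a\<^sup>2 + b\<^sup>2)) + (1 - tau) * (if a > 0 then pos b else 0)"
definition pb :: "real \<Rightarrow> real \<Rightarrow> real \<Rightarrow> real" where
  "pb tau a b = tau * (1 - b / sqrt (a\<^sup>2 + b\<^sup>2)) + (1 - tau) * (if b > 0 then pos a else 0)"

lemma phi_has_derivative:
  fixes fa fb :: "'a::real_normed_vector \<Rightarrow> real"
  assumes valid: "fa w < 0 \<or> fb w < 0 \<or> (fa w > 0 \<and> fb w > 0)"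
    and da: "(fa has_derivative Da) (at w)" and db: "(fb has_derivative Db) (at w)"
  shows "((\<lambda>w. phi tau (fa w) (fb w)) has_derivative
     (\<lambda>v. pa tau (fa w) (fb w) * Da v + pb tau (fa w) (fb w) * Db v)) (at w)"
proof -
  define a where "a = fa w"
  define b where "b = fb w"
  define r where "r = sqrt (a\<^sup>2 + b\<^sup>2)"
  have "a\<^sup>2 + b\<^sup>2 > 0" using valid unfolding a_def b_def
    by (metis add_pos_nonneg add_nonneg_pos power2_less_0 not_less_iff_gr_or_eq zero_less_power2 zero_le_power2)
  hence r0: "r > 0" unfolding r_def by simp
  have ds: "((\<lambda>w. sqrt ((fa w)\<^sup>2 + (fb w)\<^sup>2)) has_derivative (\<lambda>v. (a * Da v + b * Db v) / r)) (at w)"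
    using \<open>a\<^sup>2 + b\<^sup>2 > 0\<close>
    apply (auto intro!: derivative_eq_intros da db simp: a_def b_def r_def)
    apply (rule ext)
    apply (auto simp: divide_simps algebra_simps)
    done
  have d1: "((\<lambda>w. tau * (fa w + fb w - sqrt ((fa w)\<^sup>2 + (fb w)\<^sup>2))) has_derivative
      (\<lambda>v. tau * (Da v + Db v - (a * Da v + b * Db v) / r))) (at w)"
    by (intro derivative_intros da db ds)
  have ca: "(fa \<longlongrightarrow> a) (at w)" using has_derivative_continuous[OF da] unfolding a_def continuous_at .
  have cb: "(fb \<longlongrightarrow> b) (at w)" using has_derivative_continuous[OF db] unfolding b_def continuous_at .
  have d2: "((\<lambda>w. (1 - tau) * pos (fa w) * pos (fb w)) has_derivative
      (\<lambda>v. (1 - tau) * ((if a > 0 then pos b else 0) * Da v + (if b > 0 then pos a else 0) * Db v))) (at w)"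
  proof -
    consider "a < 0" | "b < 0" | "a > 0 \<and> b > 0" using valid a_def b_def by blast
    then show ?thesis
    proof cases
      case 1
      have ev: "\<forall>\<^sub>F x in at w. fa x < 0" using order_tendstoD(2)[OF ca 1] .
      have D: "((\<lambda>w. 0::real) has_derivative (\<lambda>v. 0)) (at w)" by simp
      have E: "\<forall>\<^sub>F x in at w. 0 = (1 - tau) * pos (fa x) * pos (fb x)"
        using ev by eventually_elim (simp add: pos_def)
      have "((\<lambda>w. (1 - tau) * pos (fa w) * pos (fb w)) has_derivative (\<lambda>v. 0)) (at w)"
        by (rule has_derivative_transform_eventually[OF D E]) (use 1 in \<open>simp_all add: pos_def a_def b_def\<close>)
      thus ?thesis using 1 by (simp add: pos_def a_def b_def)
    next
      case 2
      have ev: "\<forall>\<^sub>F x in at w. fb x < 0" using order_tendstoD(2)[OF cb 2] .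
      have D: "((\<lambda>w. 0::real) has_derivative (\<lambda>v. 0)) (at w)" by simp
      have E: "\<forall>\<^sub>F x in at w. 0 = (1 - tau) * pos (fa x) * pos (fb x)"
        using ev by eventually_elim (simp add: pos_def)
      have "((\<lambda>w. (1 - tau) * pos (fa w) * pos (fb w)) has_derivative (\<lambda>v. 0)) (at w)"
        by (rule has_derivative_transform_eventually[OF D E]) (use 2 in \<open>simp_all add: pos_def a_def b_def\<close>)
      thus ?thesis using 2 by (simp add: pos_def a_def b_def)
    next
      case 3
      have ev: "\<forall>\<^sub>F x in at w. fa x > 0 \<and> fb x > 0"
        using order_tendstoD(1)[OF ca] order_tendstoD(1)[OF cb] 3 eventually_conj by blast
      have "((\<lambda>w. (1 - tau) * fa w * fb w) has_derivative
         (\<lambda>v. (1 - tau) * ((if a > 0 then pos b else 0) * Da v + (if b > 0 then pos a else 0) * Db v))) (at w)"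
        using 3 by (auto intro!: derivative_eq_intros da db simp: pos_def a_def b_def algebra_simps)
      moreover have "\<forall>\<^sub>F x in at w. (1 - tau) * fa x * fb x = (1 - tau) * pos (fa x) * pos (fb x)"
        using ev by eventually_elim (simp add: pos_def)
      ultimately show ?thesis
        by (rule has_derivative_transform_eventually) (use 3 in \<open>simp_all add: pos_def a_def b_def\<close>)
    qed
  qed
  have "((\<lambda>w. phi tau (fa w) (fb w)) has_derivative
     (\<lambda>v. tau * (Da v + Db v - (a * Da v + b * Db v) / r) +
       (1 - tau) * ((if a > 0 then pos b else 0) * Da v + (if b > 0 then pos a else 0) * Db v))) (at w)"
    using has_derivative_add[OF d1 d2] by (simp add: phi_def)
  moreover have "(\<lambda>v. tau * (Da v + Db v - (a * Da v + b * Db v) / r) +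
       (1 - tau) * ((if a > 0 then pos b else 0) * Da v + (if b > 0 then pos a else 0) * Db v))
     = (\<lambda>v. pa tau (fa w) (fb w) * Da v + pb tau (fa w) (fb w) * Db v)"
    using r0 by (auto simp: pa_def pb_def a_def[symmetric] b_def[symmetric] r_def[symmetric] field_simps)
  ultimately show ?thesis by simp
qed



lemma norm_pair_real: "norm (x::real, f::real) = sqrt (x\<^sup>2 + f\<^sup>2)"
  by (simp add: norm_Pair)

lemma sq_lim:
  fixes a b :: "real \<Rightarrow> real"
  assumes "(a \<longlongrightarrow> x) F" "(b \<longlongrightarrow> f) F" "x \<noteq> 0 \<or> f \<noteq> 0"
  shows "((\<lambda>e. a e / sqrt ((a e)\<^sup>2 + (b e)\<^sup>2)) \<longlongrightarrow> x / norm (x, f)) F"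
        "((\<lambda>e. b e / sqrt ((a e)\<^sup>2 + (b e)\<^sup>2)) \<longlongrightarrow> f / norm (x, f)) F"
proof -
  have "sqrt (x\<^sup>2 + f\<^sup>2) \<noteq> 0" using assms(3)
    by (metis add_nonneg_nonneg power_not_zero real_sqrt_eq_zero_cancel_iff sum_power2_eq_zero_iff zero_le_power2)
  then show "((\<lambda>e. a e / sqrt ((a e)\<^sup>2 + (b e)\<^sup>2)) \<longlongrightarrow> x / norm (x, f)) F"
        "((\<lambda>e. b e / sqrt ((a e)\<^sup>2 + (b e)\<^sup>2)) \<longlongrightarrow> f / norm (x, f)) F"
    unfolding norm_pair_real by (auto intro!: tendsto_intros assms(1,2))
qed

lemma sq_lim2:
  fixes a b :: "real \<Rightarrow> real"
  assumes "(a \<longlongrightarrow> x) F" "(b \<longlongrightarrow> f) F" "x \<noteq> 0 \<or> f \<noteq> 0"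
  shows "((\<lambda>e. tau * (1 - a e / sqrt ((a e)\<^sup>2 + (b e)\<^sup>2))) \<longlongrightarrow> tau * (1 - x / norm (x, f))) F"
        "((\<lambda>e. tau * (1 - b e / sqrt ((a e)\<^sup>2 + (b e)\<^sup>2))) \<longlongrightarrow> tau * (1 - f / norm (x, f))) F"
  by (rule tendsto_mult[OF tendsto_const tendsto_diff[OF tendsto_const sq_lim(1)[OF assms]]],
      rule tendsto_mult[OF tendsto_const tendsto_diff[OF tendsto_const sq_lim(2)[OF assms]]])

lemma sqrt_scale: "(e::real) > 0 \<Longrightarrow> sqrt (e\<^sup>2 + b\<^sup>2) = e * sqrt (1 + (b / e)\<^sup>2)"
proof -
  assume e: "e > 0"
  have "e\<^sup>2 + b\<^sup>2 = e\<^sup>2 * (1 + (b / e)\<^sup>2)" using e by (simp add: field_simps)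
  hence "sqrt (e\<^sup>2 + b\<^sup>2) = sqrt (e\<^sup>2) * sqrt (1 + (b / e)\<^sup>2)" by (simp add: real_sqrt_mult)
  thus ?thesis using e by simp
qed

lemma pos_tendsto: "(f \<longlongrightarrow> l) F \<Longrightarrow> ((\<lambda>x. pos (f x)) \<longlongrightarrow> pos l) F"
  unfolding pos_def by (intro tendsto_intros)

lemma row:
  fixes F :: "(real^'n::finite) \<times> real \<Rightarrow> real^'n" and z :: "(real^'n) \<times> real"
  assumes cF: "\<And>i. continuous_on UNIV (\<lambda>w. F w $ i)"
    and dF: "\<And>i w. ((\<lambda>w. F w $ i) has_derivative (\<lambda>h. h \<bullet> gradF F w i)) (at w)"
    and S3h: "i \<in> S3 F z \<Longrightarrow> sval F z i \<noteq> 0"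
  defines "d \<equiv> (cvec F z, 0::real)"
  shows "\<exists>PA PB. procP tau F z i = PA *\<^sub>R (axis i 1, 0) + PB *\<^sub>R gradF F z i
     \<and> ((\<lambda>e. pa tau (fst z $ i - e * cvec F z $ i) (F (z - e *\<^sub>R d) $ i)) \<longlongrightarrow> PA) (at_right 0)
     \<and> ((\<lambda>e. pb tau (fst z $ i - e * cvec F z $ i) (F (z - e *\<^sub>R d) $ i)) \<longlongrightarrow> PB) (at_right 0)
     \<and> (\<forall>\<^sub>F e in at_right 0. (fst z $ i - e * cvec F z $ i) < 0 \<or> F (z - e *\<^sub>R d) $ i < 0
          \<or> ((fst z $ i - e * cvec F z $ i) > 0 \<and> F (z - e *\<^sub>R d) $ i > 0))"
proof -
  define x where "x = fst z $ i"
  define f where "f = F z $ i"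
  define c where "c = cvec F z $ i"
  define s where "s = sval F z i"
  define g where "g = gradF F z i"
  define a where "a = (\<lambda>e::real. x - e * c)"
  define b where "b = (\<lambda>e::real. F (z - e *\<^sub>R d) $ i)"
  have epos: "\<forall>\<^sub>F e in at_right (0::real). e > 0" by (rule eventually_at_right_less)
  have at: "(a \<longlongrightarrow> x) (at_right 0)" unfolding a_def by (auto intro!: tendsto_eq_intros simp del: scaleR_minus_left)
  have pt: "((\<lambda>e::real. z - e *\<^sub>R d) \<longlongrightarrow> z) (at_right 0)" by (auto intro!: tendsto_eq_intros simp del: scaleR_minus_left)
  have bt: "(b \<longlongrightarrow> f) (at_right 0)"
  proof -
    have "isCont (\<lambda>w. F w $ i) z"
      using continuous_on_eq_continuous_at[OF open_UNIV, of "\<lambda>w. F w $ i"] cF by (cases z) simp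
    from isCont_tendsto_compose[OF this pt] show ?thesis by (simp add: b_def f_def)
  qed
  have sd: "s = d \<bullet> g" unfolding s_def d_def g_def sval_def gradxF_def
    by (simp add: inner_Pair_0 inner_commute)
  have bq: "((\<lambda>e. (b e - f) / e) \<longlongrightarrow> - s) (at_right 0)"
  proof -
    have p: "((\<lambda>e::real. z - e *\<^sub>R d) has_derivative (\<lambda>h. - (h *\<^sub>R d))) (at 0)"
      by (auto intro!: derivative_eq_intros)
    have "((\<lambda>e. F (z - e *\<^sub>R d) $ i) has_derivative (\<lambda>h. (- (h *\<^sub>R d)) \<bullet> gradF F (z - 0 *\<^sub>R d) i)) (at 0)"
      using has_derivative_compose[OF p dF] by simp
    moreover have "(\<lambda>h. (- (h *\<^sub>R d)) \<bullet> gradF F (z - 0 *\<^sub>R d) i) = (*) (- s)"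
      by (rule ext) (simp add: sd g_def)
    ultimately have "(b has_field_derivative (- s)) (at 0)"
      unfolding has_field_derivative_def b_def by simp
    hence "((\<lambda>y. (b y - b 0) / (y - 0)) \<longlongrightarrow> - s) (at 0)" using has_field_derivative_iff by blast
    hence "((\<lambda>y. (b y - f) / y) \<longlongrightarrow> - s) (at 0)" by (simp add: b_def f_def)
    thus ?thesis by (rule tendsto_mono[rotated]) (simp add: at_within_le_at)
  qed
  have papb: "pa tau (a e) (b e) = tau * (1 - a e / sqrt ((a e)\<^sup>2 + (b e)\<^sup>2)) + (1 - tau) * (if a e > 0 then pos (b e) else 0)"
    "pb tau (a e) (b e) = tau * (1 - b e / sqrt ((a e)\<^sup>2 + (b e)\<^sup>2)) + (1 - tau) * (if b e > 0 then pos (a e) else 0)" for e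
    by (simp_all add: pa_def pb_def)
  have goal: "\<exists>PA PB. procP tau F z i = PA *\<^sub>R (axis i 1, 0) + PB *\<^sub>R g
     \<and> ((\<lambda>e. pa tau (a e) (b e)) \<longlongrightarrow> PA) (at_right 0)
     \<and> ((\<lambda>e. pb tau (a e) (b e)) \<longlongrightarrow> PB) (at_right 0)
     \<and> (\<forall>\<^sub>F e in at_right 0. a e < 0 \<or> b e < 0 \<or> (a e > 0 \<and> b e > 0))"
  proof -
    have m1: "i \<in> S1 F z \<longleftrightarrow> x = 0 \<and> f = 0" by (simp add: S1_def x_def f_def)
    have m3: "i \<in> S3 F z \<longleftrightarrow> x > 0 \<and> f = 0" by (simp add: S3_def x_def f_def)
    have m4: "i \<in> S4 F z \<longleftrightarrow> x > 0 \<and> f > 0" by (simp add: S4_def x_def f_def)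
    have cv: "c = (if x = 0 \<and> f = 0 \<or> x = 0 \<and> f > 0 \<or> x > 0 \<and> f = 0 then 1 else 0)"
      by (simp add: c_def cvec_def S1_def S2_def S3_def x_def f_def)
    have P: "procP tau F z i =
      (if x = 0 \<and> f = 0 then
       (tau * (1 + c / norm (c, s))) *\<^sub>R (axis i 1, 0) + (tau * (1 + s / norm (c, s))) *\<^sub>R g
     else if x > 0 \<and> f = 0 then
       (if s < 0 then (tau + (1 - tau) * x) *\<^sub>R g else tau *\<^sub>R g)
     else if x > 0 \<and> f > 0 then
       (tau * (1 - x / norm (x, f)) + (1 - tau) * f) *\<^sub>R (axis i 1, 0)
       + (tau * (1 - f / norm (x, f)) + (1 - tau) * x) *\<^sub>R g
     else
       (tau * (1 - x / norm (x, f))) *\<^sub>R (axis i 1, 0) + (tau * (1 - f / norm (x, f))) *\<^sub>R g)"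
      unfolding procP_def Let_def m1[symmetric] m3[symmetric] m4[symmetric]
      by (simp add: x_def f_def c_def s_def g_def)
    consider (C1) "x = 0" "f = 0" | (C3) "x > 0" "f = 0" | (C4) "x > 0" "f > 0"
      | (CE) "\<not> (x = 0 \<and> f = 0)" "\<not> (x > 0 \<and> f = 0)" "\<not> (x > 0 \<and> f > 0)"
      by blast
    then show ?thesis
    proof cases
      case C1
      have c1: "c = 1" using cv C1 by simp
      have ae: "a e = - e" for e unfolding a_def using C1 c1 by simp
      define q where "q = (\<lambda>e. b e / e)"
      have qt: "(q \<longlongrightarrow> - s) (at_right 0)" using bq C1 unfolding q_def by simp
      have n1: "norm (1::real, s) = sqrt (1 + (- s)\<^sup>2)" by (simp add: norm_pair_real)
      have ev: "\<forall>\<^sub>F e in at_right 0. pa tau (a e) (b e) = tau * (1 + 1 / sqrt (1 + (q e)\<^sup>2))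
                 \<and> pb tau (a e) (b e) = tau * (1 - q e / sqrt (1 + (q e)\<^sup>2)) \<and> a e < 0"
        using epos
      proof eventually_elim
        case (elim e)
        define Q where "Q = sqrt (1 + (q e)\<^sup>2)"
        have sq: "sqrt ((a e)\<^sup>2 + (b e)\<^sup>2) = e * Q"
          using sqrt_scale[OF elim, of "b e"] by (simp add: ae q_def Q_def)
        have Q0: "Q > 0" unfolding Q_def by (simp add: add_pos_nonneg)
        have "pa tau (a e) (b e) = tau * (1 - a e / (e * Q)) + (1 - tau) * (if a e > 0 then pos (b e) else 0)"
          "pb tau (a e) (b e) = tau * (1 - b e / (e * Q)) + (1 - tau) * (if b e > 0 then pos (a e) else 0)"
          using papb[of e] sq by simp_all
        moreover have "a e / (e * Q) = - (1 / Q)" "b e / (e * Q) = q e / Q"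
          using elim Q0 by (simp_all add: ae q_def field_simps)
        ultimately show ?case using elim by (simp add: ae pos_def flip: Q_def)
      qed
      define t where "t = - s"
      have qt': "(q \<longlongrightarrow> t) (at_right 0)" using qt t_def by simp
      have t2: "1 + t\<^sup>2 \<noteq> 0" by (smt (verit) zero_le_power2)
      have "((\<lambda>e. tau * (1 + 1 / sqrt (1 + (q e)\<^sup>2))) \<longlongrightarrow> tau * (1 + 1 / sqrt (1 + t\<^sup>2))) (at_right 0)"
        using t2 by (intro tendsto_intros qt') simp
      hence "((\<lambda>e. tau * (1 + 1 / sqrt (1 + (q e)\<^sup>2))) \<longlongrightarrow> tau * (1 + c / norm (c, s))) (at_right 0)"
        unfolding c1 n1 t_def by simp
      hence L1: "((\<lambda>e. pa tau (a e) (b e)) \<longlongrightarrow> tau * (1 + c / norm (c, s))) (at_right 0)"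
        by (rule Lim_transform_eventually) (rule eventually_mono[OF ev], simp)
      have "((\<lambda>e. tau * (1 - q e / sqrt (1 + (q e)\<^sup>2))) \<longlongrightarrow> tau * (1 - t / sqrt (1 + t\<^sup>2))) (at_right 0)"
        using t2 by (intro tendsto_intros qt') simp
      hence "((\<lambda>e. tau * (1 - q e / sqrt (1 + (q e)\<^sup>2))) \<longlongrightarrow> tau * (1 + s / norm (c, s))) (at_right 0)"
        unfolding c1 n1 t_def by simp
      hence L2: "((\<lambda>e. pb tau (a e) (b e)) \<longlongrightarrow> tau * (1 + s / norm (c, s))) (at_right 0)"
        by (rule Lim_transform_eventually) (rule eventually_mono[OF ev], simp)
      show ?thesis
        apply (rule exI[of _ "tau * (1 + c / norm (c, s))"], rule exI[of _ "tau * (1 + s / norm (c, s))"])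
        apply (intro conjI L1 L2)
        subgoal using P C1 by simp
        subgoal by (rule eventually_mono[OF ev]) simp
        done
    next
      case C3
      have c1: "c = 1" using cv C3 by simp
      have s0: "s \<noteq> 0" using S3h m3 C3 s_def by simp
      have qt: "((\<lambda>e. b e / e) \<longlongrightarrow> - s) (at_right 0)" using bq C3 by simp
      have apos: "\<forall>\<^sub>F e in at_right 0. a e > 0" using order_tendstoD(1)[OF at] C3 by simp
      have nx: "norm (x, 0::real) = x" using C3 by simp
      have F1: "((\<lambda>e. tau * (1 - a e / sqrt ((a e)\<^sup>2 + (b e)\<^sup>2))) \<longlongrightarrow> tau * (1 - x / norm (x, f))) (at_right 0)"
        using C3 by (intro sq_lim2(1)[OF at bt]) auto
      have F2: "((\<lambda>e. tau * (1 - b e / sqrt ((a e)\<^sup>2 + (b e)\<^sup>2))) \<longlongrightarrow> tau * (1 - f / norm (x, f))) (at_right 0)"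
        using C3 by (intro sq_lim2(2)[OF at bt]) auto
      have E1: "((\<lambda>e. (1 - tau) * (if a e > 0 then pos (b e) else 0)) \<longlongrightarrow> (1 - tau) * pos f) (at_right 0)"
      proof -
        have "((\<lambda>e. (1 - tau) * pos (b e)) \<longlongrightarrow> (1 - tau) * pos f) (at_right 0)"
          by (intro tendsto_intros pos_tendsto bt)
        thus ?thesis by (rule Lim_transform_eventually) (rule eventually_mono[OF apos], simp)
      qed
      have L1: "((\<lambda>e. pa tau (a e) (b e)) \<longlongrightarrow> 0) (at_right 0)"
        using tendsto_add[OF F1 E1] C3 nx by (simp add: papb pos_def)
      define PB where "PB = (if s < 0 then tau + (1 - tau) * x else tau)"
      have L2: "((\<lambda>e. pb tau (a e) (b e)) \<longlongrightarrow> PB) (at_right 0)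
         \<and> (\<forall>\<^sub>F e in at_right 0. b e \<noteq> 0)"
      proof (cases "s < 0")
        case True
        have "\<forall>\<^sub>F e in at_right 0. b e / e > 0" using order_tendstoD(1)[OF qt] True by simp
        hence bp: "\<forall>\<^sub>F e in at_right 0. b e > 0" using epos
          by eventually_elim (simp add: zero_less_divide_iff)
        have "((\<lambda>e. (1 - tau) * pos (a e)) \<longlongrightarrow> (1 - tau) * pos x) (at_right 0)"
          by (intro tendsto_intros pos_tendsto at)
        hence E2: "((\<lambda>e. (1 - tau) * (if b e > 0 then pos (a e) else 0)) \<longlongrightarrow> (1 - tau) * pos x) (at_right 0)"
          by (rule Lim_transform_eventually) (rule eventually_mono[OF bp], simp)
        have "((\<lambda>e. pb tau (a e) (b e)) \<longlongrightarrow> PB) (at_right 0)"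
          using tendsto_add[OF F2 E2] C3 nx True by (simp add: papb pos_def PB_def)
        moreover have "\<forall>\<^sub>F e in at_right 0. b e \<noteq> 0" by (rule eventually_mono[OF bp]) simp
        ultimately show ?thesis by blast
      next
        case False
        hence "s > 0" using s0 by simp
        have "\<forall>\<^sub>F e in at_right 0. b e / e < 0" using order_tendstoD(2)[OF qt] \<open>s > 0\<close> by simp
        hence bn: "\<forall>\<^sub>F e in at_right 0. b e < 0" using epos
          by eventually_elim (simp add: divide_less_0_iff)
        have "((\<lambda>e. 0::real) \<longlongrightarrow> 0) (at_right 0)" by simp
        hence E2: "((\<lambda>e. (1 - tau) * (if b e > 0 then pos (a e) else 0)) \<longlongrightarrow> 0) (at_right 0)"
          by (rule Lim_transform_eventually) (rule eventually_mono[OF bn], simp)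
        have "((\<lambda>e. pb tau (a e) (b e)) \<longlongrightarrow> PB) (at_right 0)"
          using tendsto_add[OF F2 E2] C3 nx False by (simp add: papb pos_def PB_def)
        moreover have "\<forall>\<^sub>F e in at_right 0. b e \<noteq> 0" by (rule eventually_mono[OF bn]) simp
        ultimately show ?thesis by blast
      qed
      have V: "\<forall>\<^sub>F e in at_right 0. a e < 0 \<or> b e < 0 \<or> (a e > 0 \<and> b e > 0)"
        using apos conjunct2[OF L2] by eventually_elim auto
      show ?thesis
        apply (rule exI[of _ 0], rule exI[of _ PB])
        apply (intro conjI L1 V conjunct1[OF L2])
        using P C3 by (simp add: PB_def zero_prod_def)
    next
      case C4
      have c0: "c = 0" using cv C4 by simp
      have ae: "a e = x" for e unfolding a_def using c0 by simp
      have bp: "\<forall>\<^sub>F e in at_right 0. b e > 0" using order_tendstoD(1)[OF bt] C4 by simp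
      have F1: "((\<lambda>e. tau * (1 - a e / sqrt ((a e)\<^sup>2 + (b e)\<^sup>2))) \<longlongrightarrow> tau * (1 - x / norm (x, f))) (at_right 0)"
        using C4 by (intro sq_lim2(1)[OF at bt]) auto
      have F2: "((\<lambda>e. tau * (1 - b e / sqrt ((a e)\<^sup>2 + (b e)\<^sup>2))) \<longlongrightarrow> tau * (1 - f / norm (x, f))) (at_right 0)"
        using C4 by (intro sq_lim2(2)[OF at bt]) auto
      have "((\<lambda>e. (1 - tau) * pos (b e)) \<longlongrightarrow> (1 - tau) * pos f) (at_right 0)"
        by (intro tendsto_intros pos_tendsto bt)
      hence E1: "((\<lambda>e. (1 - tau) * (if a e > 0 then pos (b e) else 0)) \<longlongrightarrow> (1 - tau) * f) (at_right 0)"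
        using C4 by (simp add: ae pos_def)
      have "((\<lambda>e. (1 - tau) * x) \<longlongrightarrow> (1 - tau) * x) (at_right 0)" by simp
      hence E2: "((\<lambda>e. (1 - tau) * (if b e > 0 then pos (a e) else 0)) \<longlongrightarrow> (1 - tau) * x) (at_right 0)"
        by (rule Lim_transform_eventually) (rule eventually_mono[OF bp], use C4 in \<open>simp add: ae pos_def\<close>)
      show ?thesis
        apply (rule exI[of _ "tau * (1 - x / norm (x, f)) + (1 - tau) * f"],
               rule exI[of _ "tau * (1 - f / norm (x, f)) + (1 - tau) * x"])
        apply (intro conjI)
        subgoal using P C4 by simp
        subgoal using tendsto_add[OF F1 E1] by (simp add: papb)
        subgoal using tendsto_add[OF F2 E2] by (simp add: papb)
        subgoal by (rule eventually_mono[OF bp]) (use C4 in \<open>simp add: ae\<close>)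
        done
    next
      case CE
      have xf: "x \<noteq> 0 \<or> f \<noteq> 0" using CE by auto
      have neg: "\<forall>\<^sub>F e in at_right 0. a e < 0 \<or> b e < 0"
      proof (cases "x = 0 \<and> f > 0")
        case True
        hence "c = 1" using cv by simp
        thus ?thesis using True by (intro eventually_mono[OF epos]) (simp add: a_def)
      next
        case False
        show ?thesis
        proof (cases "x < 0")
          case True
          hence "c = 0" using cv by auto
          thus ?thesis using True by (auto simp: a_def)
        next
          case False
          hence "f < 0" using CE \<open>\<not> (x = 0 \<and> f > 0)\<close> by auto
          from order_tendstoD(2)[OF bt this] show ?thesis by eventually_elim simp
        qed
      qed
      have F1: "((\<lambda>e. tau * (1 - a e / sqrt ((a e)\<^sup>2 + (b e)\<^sup>2))) \<longlongrightarrow> tau * (1 - x / norm (x, f))) (at_right 0)"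
        by (rule sq_lim2(1)[OF at bt xf])
      have F2: "((\<lambda>e. tau * (1 - b e / sqrt ((a e)\<^sup>2 + (b e)\<^sup>2))) \<longlongrightarrow> tau * (1 - f / norm (x, f))) (at_right 0)"
        by (rule sq_lim2(2)[OF at bt xf])
      have L1: "((\<lambda>e. pa tau (a e) (b e)) \<longlongrightarrow> tau * (1 - x / norm (x, f))) (at_right 0)"
        by (rule Lim_transform_eventually[OF F1]) (rule eventually_mono[OF neg], auto simp: papb pos_def)
      have L2: "((\<lambda>e. pb tau (a e) (b e)) \<longlongrightarrow> tau * (1 - f / norm (x, f))) (at_right 0)"
        by (rule Lim_transform_eventually[OF F2]) (rule eventually_mono[OF neg], auto simp: papb pos_def)
      show ?thesis
        apply (rule exI[of _ "tau * (1 - x / norm (x, f))"], rule exI[of _ "tau * (1 - f / norm (x, f))"])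
        apply (intro conjI L1 L2)
        subgoal using P CE by simp
        subgoal by (rule eventually_mono[OF neg]) auto
        done
    qed
  qed

  thus ?thesis unfolding a_def b_def x_def c_def g_def .
qed



lemma has_derivative_vecI:
  fixes f :: "'a::real_normed_vector \<Rightarrow> real^'n::finite"
  assumes "\<And>i. ((\<lambda>x. f x $ i) has_derivative (\<lambda>v. f' v $ i)) (at a)"
  shows "(f has_derivative f') (at a)"
  apply (subst has_derivative_componentwise_within)
  using assms by (auto simp: Basis_vec_def inner_axis)

lemma F_props:
  fixes A B :: "('n::finite) tensor"
  shows "continuous_on UNIV (\<lambda>w. FF m A B w $ i)"
    "((\<lambda>w. FF m A B w $ i) has_derivative (\<lambda>h. h \<bullet> gradF (FF m A B) w i)) (at w)"
    "continuous_on UNIV (\<lambda>w. v \<bullet> gradF (FF m A B) w i)"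
proof -
  show "continuous_on UNIV (\<lambda>w. FF m A B w $ i)" by (rule polyf_cont[OF FF_polyf])
  obtain df where df: "\<forall>w. ((\<lambda>w. FF m A B w $ i) has_derivative df w) (at w)" "\<forall>v. (\<lambda>w. df w v) \<in> polyf"
    using polyf_deriv[OF FF_polyf] by blast
  show "((\<lambda>w. FF m A B w $ i) has_derivative (\<lambda>h. h \<bullet> gradF (FF m A B) w i)) (at w)"
    using grad_polyf(1)[OF df(1), of w] unfolding gradF_def gderiv_def .
  have eq: "(\<lambda>w. v \<bullet> gradF (FF m A B) w i) = (\<lambda>w. df w v)"
    using grad_polyf(2)[OF df(1)] unfolding gradF_def by (simp add: inner_commute)
  thus "continuous_on UNIV (\<lambda>w. v \<bullet> gradF (FF m A B) w i)" unfolding eq using polyf_cont[of "\<lambda>w. df w v"] df(2) by simp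
qed

definition DH :: "real \<Rightarrow> ((real^'n::finite) \<times> real \<Rightarrow> real^'n) \<Rightarrow> (real^'n) \<times> real \<Rightarrow> (real^'n) \<times> real \<Rightarrow> (real^'n) \<times> real" where
  "DH tau F w v = ((\<chi> i. pa tau (fst w $ i) (F w $ i) * (fst v $ i) + pb tau (fst w $ i) (F w $ i) * (v \<bullet> gradF F w i)),
      2 * (fst w \<bullet> fst v))"

lemma HH_deriv:
  fixes A B :: "('n::finite) tensor"
  assumes "\<And>i. fst w $ i < 0 \<or> FF m A B w $ i < 0 \<or> (fst w $ i > 0 \<and> FF m A B w $ i > 0)"
  shows "(HH m A B tau has_derivative DH tau (FF m A B) w) (at w)"
proof -
  have d1: "((\<lambda>w. (\<chi> i. phi tau (fst w $ i) (FF m A B w $ i))) has_derivative (\<lambda>v. fst (DH tau (FF m A B) w v))) (at w)"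
  proof (rule has_derivative_vecI)
    fix i
    have la: "((\<lambda>w::(real^'n)\<times>real. fst w $ i) has_derivative (\<lambda>v. fst v $ i)) (at w)"
      by (rule bounded_linear_imp_has_derivative)
         (rule bounded_linear_compose[OF bounded_linear_vec_nth bounded_linear_fst])
    have "((\<lambda>w. phi tau (fst w $ i) (FF m A B w $ i)) has_derivative
       (\<lambda>v. pa tau (fst w $ i) (FF m A B w $ i) * (fst v $ i) + pb tau (fst w $ i) (FF m A B w $ i) * (v \<bullet> gradF (FF m A B) w i))) (at w)"
      by (rule phi_has_derivative[OF assms la F_props(2)])
    thus "((\<lambda>x. (\<chi> i. phi tau (fst x $ i) (FF m A B x $ i)) $ i) has_derivative (\<lambda>v. fst (DH tau (FF m A B) w v) $ i)) (at w)"
      by (simp add: DH_def)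
  qed
  have d2: "((\<lambda>w::(real^'n)\<times>real. fst w \<bullet> fst w - 1) has_derivative (\<lambda>v. snd (DH tau (FF m A B) w v))) (at w)"
    apply (rule derivative_eq_intros | simp)+
    apply (rule ext)
    apply (simp add: DH_def inner_commute)
    done
  have "((\<lambda>w. ((\<chi> i. phi tau (fst w $ i) (FF m A B w $ i)), fst w \<bullet> fst w - 1)) has_derivative
     (\<lambda>v. (fst (DH tau (FF m A B) w v), snd (DH tau (FF m A B) w v)))) (at w)"
    by (rule has_derivative_Pair[OF d1 d2])
  thus ?thesis unfolding HH_def by simp
qed



theorem theorem2:
  fixes m :: nat and A B :: "('n::finite) tensor" and tau :: real and z :: "(real^'n) \<times> real"
  assumes "even m" and "m \<ge> 2"
    and "symmetric_tensor m B"
    and "\<forall>x::real^'n. x \<noteq> 0 \<longrightarrow> tpow m B x > 0"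
    and "0 < tau" and "tau < 1"
    and "\<forall>i\<in>S3 (FF m A B) z. sval (FF m A B) z i \<noteq> 0"
  shows "(\<lambda>v. ((\<chi> i. procP tau (FF m A B) z i \<bullet> v), (2 *\<^sub>R fst z, 0::real) \<bullet> v))
           \<in> Bsubdiff (HH m A B tau) z"
proof -
  define F where "F = FF m A B"
  define d where "d = (cvec F z, 0::real)"
  define R where "R = (\<lambda>i PA PB. procP tau F z i = PA *\<^sub>R (axis i 1, 0) + PB *\<^sub>R gradF F z i
     \<and> ((\<lambda>e. pa tau (fst z $ i - e * cvec F z $ i) (F (z - e *\<^sub>R d) $ i)) \<longlongrightarrow> PA) (at_right 0)
     \<and> ((\<lambda>e. pb tau (fst z $ i - e * cvec F z $ i) (F (z - e *\<^sub>R d) $ i)) \<longlongrightarrow> PB) (at_right 0)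
     \<and> (\<forall>\<^sub>F e in at_right 0. (fst z $ i - e * cvec F z $ i) < 0 \<or> F (z - e *\<^sub>R d) $ i < 0
          \<or> ((fst z $ i - e * cvec F z $ i) > 0 \<and> F (z - e *\<^sub>R d) $ i > 0)))"
  have "\<forall>i. \<exists>PA PB. R i PA PB"
  proof
    fix i
    show "\<exists>PA PB. R i PA PB" unfolding R_def d_def
      by (rule row) (use assms(7) F_props in \<open>auto simp: F_def\<close>)
  qed
  then obtain PA PB where PR: "\<And>i. R i (PA i) (PB i)" by metis
  have fz: "fst (z - e *\<^sub>R d) $ i = fst z $ i - e * cvec F z $ i" for e i
    by (simp add: d_def)
  have "\<forall>\<^sub>F e in at_right 0. \<forall>i. fst (z - e *\<^sub>R d) $ i < 0 \<or> F (z - e *\<^sub>R d) $ i < 0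
          \<or> (fst (z - e *\<^sub>R d) $ i > 0 \<and> F (z - e *\<^sub>R d) $ i > 0)"
    unfolding fz by (rule eventually_all_finite) (use PR in \<open>simp add: R_def\<close>)
  then obtain delta where dpos: "delta > (0::real)" and dv: "\<And>e i. e > 0 \<Longrightarrow> e < delta \<Longrightarrow>
      fst (z - e *\<^sub>R d) $ i < 0 \<or> F (z - e *\<^sub>R d) $ i < 0 \<or> (fst (z - e *\<^sub>R d) $ i > 0 \<and> F (z - e *\<^sub>R d) $ i > 0)"
    unfolding eventually_at_right_field by auto
  define ek where "ek = (\<lambda>k::nat. delta / 2 * inverse (real (Suc k)))"
  have ekpos: "ek k > 0" for k unfolding ek_def using dpos by simp
  have eklt: "ek k < delta" for k
  proof -
    have "inverse (real (Suc k)) \<le> 1" by (simp add: inverse_le_1_iff)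
    hence "ek k \<le> delta / 2" unfolding ek_def using dpos by (simp add: mult_left_le)
    thus ?thesis using dpos by simp
  qed
  have ekt: "ek \<longlonglongrightarrow> 0" unfolding ek_def
    by (rule tendsto_mult_right_zero[OF LIMSEQ_inverse_real_of_nat])
  have ekf: "filterlim ek (at_right 0) sequentially"
    by (rule tendsto_imp_filterlim_at_right[OF ekt]) (simp add: ekpos)
  define zk where "zk = (\<lambda>k. z - ek k *\<^sub>R d)"
  define Dk where "Dk = (\<lambda>k. DH tau F (zk k))"
  have pt: "((\<lambda>e::real. z - e *\<^sub>R d) \<longlongrightarrow> z) (at_right 0)" by (auto intro!: tendsto_eq_intros simp del: scaleR_minus_left)
  have zkt: "zk \<longlonglongrightarrow> z" unfolding zk_def using ekt by (auto intro!: tendsto_eq_intros simp del: scaleR_minus_left)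
  have der: "(HH m A B tau has_derivative Dk k) (at (zk k))" for k
    unfolding Dk_def zk_def F_def using dv[OF ekpos eklt] unfolding F_def by (rule HH_deriv)
  have lim: "(\<lambda>k. Dk k v) \<longlonglongrightarrow> ((\<chi> i. procP tau F z i \<bullet> v), (2 *\<^sub>R fst z, 0::real) \<bullet> v)" for v
  proof -
    have "((\<lambda>e. DH tau F (z - e *\<^sub>R d) v) \<longlongrightarrow> ((\<chi> i. procP tau F z i \<bullet> v), (2 *\<^sub>R fst z, 0::real) \<bullet> v)) (at_right 0)"
      unfolding DH_def
    proof (rule tendsto_Pair)
      show "((\<lambda>e. \<chi> i. pa tau (fst (z - e *\<^sub>R d) $ i) (F (z - e *\<^sub>R d) $ i) * fst v $ i +
                 pb tau (fst (z - e *\<^sub>R d) $ i) (F (z - e *\<^sub>R d) $ i) * (v \<bullet> gradF F (z - e *\<^sub>R d) i))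
            \<longlongrightarrow> (\<chi> i. procP tau F z i \<bullet> v)) (at_right 0)"
      proof (rule tendsto_vec_lambda)
        fix i
        have gc: "((\<lambda>e. v \<bullet> gradF F (z - e *\<^sub>R d) i) \<longlongrightarrow> v \<bullet> gradF F z i) (at_right 0)"
        proof -
          have "isCont (\<lambda>w. v \<bullet> gradF F w i) z"
            using continuous_on_eq_continuous_at[OF open_UNIV, of "\<lambda>w. v \<bullet> gradF F w i"] F_props(3)[where m=m and A=A and B=B and i=i and v=v]
            unfolding F_def by (cases z) simp
          from isCont_tendsto_compose[OF this pt] show ?thesis .
        qed
        have pv: "procP tau F z i \<bullet> v = PA i * fst v $ i + PB i * (v \<bullet> gradF F z i)"
          using PR[of i] unfolding R_def by (cases v) (simp add: inner_add_left inner_axis' inner_commute[of _ v] inner_commute[of "gradF F z i"])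
        show "((\<lambda>e. pa tau (fst (z - e *\<^sub>R d) $ i) (F (z - e *\<^sub>R d) $ i) * fst v $ i +
                 pb tau (fst (z - e *\<^sub>R d) $ i) (F (z - e *\<^sub>R d) $ i) * (v \<bullet> gradF F (z - e *\<^sub>R d) i))
            \<longlongrightarrow> procP tau F z i \<bullet> v) (at_right 0)"
          unfolding pv fz
          by (rule tendsto_add[OF tendsto_mult[OF _ tendsto_const] tendsto_mult[OF _ gc]])
             (use PR[of i] in \<open>simp_all add: R_def\<close>)
      qed
      have "((\<lambda>e. 2 * (fst (z - e *\<^sub>R d) \<bullet> fst v)) \<longlongrightarrow> 2 * (fst z \<bullet> fst v)) (at_right 0)"
        by (intro tendsto_intros pt)
      thus "((\<lambda>e. 2 * (fst (z - e *\<^sub>R d) \<bullet> fst v)) \<longlongrightarrow> (2 *\<^sub>R fst z, 0::real) \<bullet> v) (at_right 0)"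
        by (cases v) simp
    qed
    from filterlim_compose[OF this ekf] show ?thesis unfolding Dk_def zk_def by simp
  qed
  show ?thesis unfolding Bsubdiff_def F_def[symmetric]
    using zkt der lim by blast
qed

end
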